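(* Let $\mathcal G_{yz}$ with arrival distribution $\beta$ be obtained from $(\mathcal G_x,\alpha)$ by decomposing the node $x$ into $y$ and $z$. Let $W_{yz}$ be the FCFS Markov chain of $(\mathcal G_{yz},\beta)$. For each state (word) $w$ of $W_{yz}$ let $\mathcal M(w)$ be the set of words obtained from $w$ by replacing each occurrence of $y$ or $z$ in $w$ independently by $y$ or $z$ (so $\mathcal M(w)=\{w\}$ if $w$ contains neither $y$ nor $z$). Then $W_{yz}$ is ordinarily lumpable with respect to the partition $\{\mathcal M(w)\}$ of its state space, and the lumped Markov chain, after identifying $\mathcal M(w)$ with the word obtained from $w$ by replacing every $y$ and $z$ by $x$, is the FCFS Markov chain $W_x$ of $(\mathcal G_x,\alpha)$.
   Context: A matching model consists of a finite connected simple graph and an arrival distribution on its nodes with positive entries; in each time step an item of class $i$ arrives with probability $\alpha_i$ (independently over time). Under FCFS, the state is the word of unmatched item classes in order of arrival (no two letters adjacent in the graph); an arriving item of class $i$ deletes the oldest letter of the word that is a neighbour of $i$, and if there is none $i$ is appended at the end. Decomposition: given $\mathcal G_x=(\mathcal V,\xi)$ with node $x$ and arrival distribution $\alpha$, $\mathcal G_{yz}$ has node set $(\mathcal V\setminus\{x\})\cup\{y,z\}$ with $y,z$ new nodes; edges among $\mathcal V\setminus\{x\}$ are as in $\mathcal G_x$, each of $y$ and $z$ is adjacent exactly to the neighbours of $x$ in $\mathcal G_x$ (so $y,z$ are not adjacent), and $\beta_y>0$, $\beta_z>0$, $\beta_y+\beta_z=\alpha_x$, $\beta_i=\alpha_i$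 for $i\ne x$. A Markov chain with transition matrix $P$ is ordinarily lumpable with respect to a partition $\{A_v\}$ of its state space if for every pair of blocks $A_u,A_v$, $\sum_{j\in A_v}P(w,j)$ is the same for all $w\in A_u$. *)

theory Defs
  imports "HOL-Analysis.Analysis" "HOL-Library.Disjoint_Sets"
begin

definition simple_graph :: "'v set \<Rightarrow> ('v \<Rightarrow> 'v \<Rightarrow> bool) \<Rightarrow> bool" where
  "simple_graph V E \<longleftrightarrow> finite V \<and> (\<forall>a b. E a b \<longrightarrow> a \<in> V \<and> b \<in> V)
     \<and> (\<forall>a b. E a b \<longrightarrow> E b a) \<and> (\<forall>a. \<not> E a a)"

definition graph_connected :: "'v set \<Rightarrow> ('v \<Rightarrow> 'v \<Rightarrow> bool) \<Rightarrow> bool" where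
  "graph_connected V E \<longleftrightarrow> V \<noteq> {} \<and> (\<forall>a\<in>V. \<forall>b\<in>V. E\<^sup>*\<^sup>* a b)"

definition matching_model :: "'v set \<Rightarrow> ('v \<Rightarrow> 'v \<Rightarrow> bool) \<Rightarrow> ('v \<Rightarrow> real) \<Rightarrow> bool" where
  "matching_model V E \<alpha> \<longleftrightarrow> simple_graph V E \<and> graph_connected V E
     \<and> (\<forall>i\<in>V. \<alpha> i > 0) \<and> (\<Sum>i\<in>V. \<alpha> i) = 1"

definition fcfs_states :: "'v set \<Rightarrow> ('v \<Rightarrow> 'v \<Rightarrow> bool) \<Rightarrow> 'v list set" where
  "fcfs_states V E = {w. set w \<subseteq> V \<and> (\<forall>a\<in>set w. \<forall>b\<in>set w. \<not> E a b)}"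

text \<open>Arrival of class i: delete the oldest neighbour of i in the word, or append i.\<close>
definition fcfs_step :: "('v \<Rightarrow> 'v \<Rightarrow> bool) \<Rightarrow> 'v \<Rightarrow> 'v list \<Rightarrow> 'v list" where
  "fcfs_step E i w =
     (let p = takeWhile (\<lambda>j. \<not> E i j) w; r = dropWhile (\<lambda>j. \<not> E i j) w
      in if r = [] then w @ [i] else p @ tl r)"

definition fcfs_P :: "'v set \<Rightarrow> ('v \<Rightarrow> 'v \<Rightarrow> bool) \<Rightarrow> ('v \<Rightarrow> real) \<Rightarrow> 'v list \<Rightarrow> 'v list \<Rightarrow> real" where
  "fcfs_P V E \<alpha> w w' = (\<Sum>i\<in>V. if fcfs_step E i w = w' then \<alpha> i else 0)"

definition ordinarily_lumpable :: "('s \<Rightarrow> 's \<Rightarrow> real) \<Rightarrow> 's set set \<Rightarrow> bool" where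
  "ordinarily_lumpable P Blocks \<longleftrightarrow>
     (\<forall>A\<in>Blocks. \<forall>B\<in>Blocks. \<forall>w1\<in>A. \<forall>w2\<in>A. infsum (P w1) B = infsum (P w2) B)"

definition decomp_nodes :: "'v set \<Rightarrow> 'v \<Rightarrow> 'v \<Rightarrow> 'v \<Rightarrow> 'v set" where
  "decomp_nodes V x y z = (V - {x}) \<union> {y, z}"

definition decomp_edges :: "('v \<Rightarrow> 'v \<Rightarrow> bool) \<Rightarrow> 'v \<Rightarrow> 'v \<Rightarrow> 'v \<Rightarrow> 'v \<Rightarrow> 'v \<Rightarrow> bool" where
  "decomp_edges E x y z a b \<longleftrightarrow>
     (a \<noteq> x \<and> b \<noteq> x \<and> a \<notin> {y, z} \<and> b \<notin> {y, z} \<and> E a b)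
     \<or> (a \<in> {y, z} \<and> b \<notin> {y, z} \<and> b \<noteq> x \<and> E x b)
     \<or> (b \<in> {y, z} \<and> a \<notin> {y, z} \<and> a \<noteq> x \<and> E a x)"

definition yz_class :: "'v \<Rightarrow> 'v \<Rightarrow> 'v list \<Rightarrow> 'v list set" where
  "yz_class y z w = {w'. length w' = length w \<and>
     (\<forall>k<length w. if w ! k \<in> {y, z} then w' ! k \<in> {y, z} else w' ! k = w ! k)}"

definition merge_yz :: "'v \<Rightarrow> 'v \<Rightarrow> 'v \<Rightarrow> 'v list \<Rightarrow> 'v list" where
  "merge_yz x y z w = map (\<lambda>a. if a = y \<or> a = z then x else a) w"

end

theory Submission
  imports Defs
begin

lemma step_map:
  assumes "\<And>j. j \<in> set w \<Longrightarrow> F i j = G (f i) (f j)"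
  shows "map f (fcfs_step F i w) = fcfs_step G (f i) (map f w)"
proof -
  have t: "takeWhile (\<lambda>j. \<not> G (f i) j) (map f w) = map f (takeWhile (\<lambda>j. \<not> F i j) w)"
    by (simp add: takeWhile_map o_def) (rule arg_cong[where f="map f"], rule takeWhile_cong, auto simp: assms)
  have d: "dropWhile (\<lambda>j. \<not> G (f i) j) (map f w) = map f (dropWhile (\<lambda>j. \<not> F i j) w)"
    by (simp add: dropWhile_map o_def) (rule arg_cong[where f="map f"], rule dropWhile_cong, auto simp: assms)
  show ?thesis unfolding fcfs_step_def Let_def t d by (simp add: map_tl)
qed

lemma infsum_P:
  assumes fin: "finite V"
  shows "infsum (fcfs_P V E \<beta> w) B = (\<Sum>i\<in>V. if fcfs_step E i w \<in> B then \<beta> i else 0)"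
proof -
  let ?S = "(\<lambda>i. fcfs_step E i w) ` V"
  have "infsum (fcfs_P V E \<beta> w) B = infsum (fcfs_P V E \<beta> w) (B \<inter> ?S)"
    by (rule infsum_cong_neutral) (auto simp: fcfs_P_def intro!: sum.neutral)
  also have "\<dots> = sum (fcfs_P V E \<beta> w) (B \<inter> ?S)" using fin by simp
  also have "\<dots> = (\<Sum>i\<in>V. \<Sum>u\<in>B \<inter> ?S. if fcfs_step E i w = u then \<beta> i else 0)"
    unfolding fcfs_P_def by (rule sum.swap)
  also have "\<dots> = (\<Sum>i\<in>V. if fcfs_step E i w \<in> B then \<beta> i else 0)"
    using fin by (intro sum.cong refl) (auto simp: sum.delta)
  finally show ?thesis .
qed

theorem mainTheorem11:
  fixes V :: "'v set" and E :: "'v \<Rightarrow> 'v \<Rightarrow> bool" and \<alpha> \<beta> :: "'v \<Rightarrow> real"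
    and x y z :: 'v
  assumes model: "matching_model V E \<alpha>"
    and x_in: "x \<in> V"
    and y_new: "y \<notin> V" and z_new: "z \<notin> V" and yz: "y \<noteq> z"
    and beta_y: "\<beta> y > 0" and beta_z: "\<beta> z > 0" and beta_sum: "\<beta> y + \<beta> z = \<alpha> x"
    and beta_other: "\<forall>i\<in>V - {x}. \<beta> i = \<alpha> i"
  shows
    "let Vyz = decomp_nodes V x y z; Eyz = decomp_edges E x y z;
         Syz = fcfs_states Vyz Eyz; Pyz = fcfs_P Vyz Eyz \<beta>;
         Blocks = yz_class y z ` Syz
     in partition_on Syz Blocks
        \<and> ordinarily_lumpable Pyz Blocks
        \<and> merge_yz x y z ` Syz = fcfs_states V E
        \<and> (\<forall>w\<in>Syz. \<forall>w'\<in>Syz. merge_yz x y z w = merge_yz x y z w' \<longleftrightarrow> yz_class y z w = yz_class y z w')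
        \<and> (\<forall>w\<in>Syz. \<forall>w'\<in>Syz.
             infsum (Pyz w) (yz_class y z w') = fcfs_P V E \<alpha> (merge_yz x y z w) (merge_yz x y z w'))"
proof -
  define Vyz where "Vyz = decomp_nodes V x y z"
  define Eyz where "Eyz = decomp_edges E x y z"
  define Syz where "Syz = fcfs_states Vyz Eyz"
  define Pyz where "Pyz = fcfs_P Vyz Eyz \<beta>"
  define g where "g = (\<lambda>a. if a = y \<or> a = z then x else a)"
  have mg: "merge_yz x y z = map g" by (simp add: merge_yz_def g_def fun_eq_iff)
  have sg: "simple_graph V E" using model by (simp add: matching_model_def)
  have finV: "finite V" using sg by (simp add: simple_graph_def)
  have EV: "E a b \<Longrightarrow> a \<in> V \<and> b \<in> V" for a b using sg by (simp add: simple_graph_def)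
  have Esym: "E a b \<Longrightarrow> E b a" for a b using sg by (simp add: simple_graph_def)
  have Eirr: "\<not> E a a" for a using sg by (simp add: simple_graph_def)
  have xy: "x \<noteq> y" "x \<noteq> z" using x_in y_new z_new by auto
  have Vyz_eq: "Vyz = (V - {x}) \<union> {y, z}" by (simp add: Vyz_def decomp_nodes_def)
  have xnV: "x \<notin> Vyz" using xy by (simp add: Vyz_eq)
  have Ecorr: "a \<in> Vyz \<Longrightarrow> b \<in> Vyz \<Longrightarrow> Eyz a b = E (g a) (g b)" for a b
    using xy EV Eirr by (auto simp: Eyz_def decomp_edges_def g_def Vyz_eq)
  have Syz_def': "w \<in> Syz \<longleftrightarrow> set w \<subseteq> Vyz \<and> (\<forall>a\<in>set w. \<forall>b\<in>set w. \<not> Eyz a b)" for w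
    by (simp add: Syz_def fcfs_states_def)
  have gVyz: "a \<in> Vyz \<Longrightarrow> g a \<in> V" for a using x_in by (auto simp: Vyz_eq g_def)
  have gnx: "a \<noteq> x \<Longrightarrow> b \<noteq> x \<Longrightarrow> g a = g b \<longleftrightarrow> (if b \<in> {y, z} then a \<in> {y, z} else a = b)" for a b
    by (auto simp: g_def)
  have cls: "x \<notin> set u \<Longrightarrow> x \<notin> set v \<Longrightarrow> map g u = map g v \<longleftrightarrow> u \<in> yz_class y z v" for u v
  proof -
    assume u: "x \<notin> set u" and v: "x \<notin> set v"
    have "map g u = map g v \<longleftrightarrow> length u = length v \<and> (\<forall>k<length v. g (u!k) = g (v!k))"
      by (auto simp: list_eq_iff_nth_eq)
    also have "\<dots> \<longleftrightarrow> u \<in> yz_class y z v"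
      unfolding yz_class_def mem_Collect_eq
    proof (intro iffI conjI allI impI; (elim conjE)?)
      fix k assume "length u = length v" "\<forall>k<length v. g (u ! k) = g (v ! k)" "k < length v"
      moreover have "u!k \<noteq> x" "v!k \<noteq> x" using u v calculation by (auto dest: nth_mem)
      ultimately show "if v ! k \<in> {y, z} then u ! k \<in> {y, z} else u ! k = v ! k"
        using gnx by metis
    next
      fix k assume "length u = length v" "\<forall>k<length v. if v ! k \<in> {y, z} then u ! k \<in> {y, z} else u ! k = v ! k" "k < length v"
      moreover have "u!k \<noteq> x" "v!k \<noteq> x" using u v calculation by (auto dest: nth_mem)
      ultimately show "g (u ! k) = g (v ! k)" using gnx by metis
    qed auto
    finally show ?thesis .
  qed
  have Sx: "w \<in> Syz \<Longrightarrow> x \<notin> set w" for w using xnV by (auto simp: Syz_def')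
  have cls_sub: "w \<in> Syz \<Longrightarrow> yz_class y z w \<subseteq> Syz" for w
  proof
    fix u assume w: "w \<in> Syz" and u: "u \<in> yz_class y z w"
    have ux: "x \<notin> set u"
    proof
      assume "x \<in> set u"
      then obtain k where k: "k < length u" "u!k = x" by (auto simp: in_set_conv_nth)
      with u have "if w ! k \<in> {y, z} then x \<in> {y, z} else x = w ! k" by (auto simp: yz_class_def)
      with xy Sx[OF w] k u show False by (auto simp: yz_class_def split: if_splits)
    qed
    have m: "map g u = map g w" using cls[OF ux Sx[OF w]] u by simp
    have uV: "set u \<subseteq> Vyz"
    proof
      fix a assume "a \<in> set u"
      then obtain k where k: "k < length u" "u!k = a" by (auto simp: in_set_conv_nth)
      have "length u = length w" using u by (simp add: yz_class_def)
      with k u have "if w ! k \<in> {y, z} then a \<in> {y, z} else a = w ! k" by (auto simp: yz_class_def)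
      moreover have "w!k \<in> Vyz" using w k \<open>length u = length w\<close> by (auto simp: Syz_def' dest!: nth_mem)
      ultimately show "a \<in> Vyz" by (auto simp: Vyz_eq split: if_splits)
    qed
    have "\<not> Eyz a b" if a: "a \<in> set u" and b: "b \<in> set u" for a b
    proof -
      have "g a \<in> set (map g w)" "g b \<in> set (map g w)" using a b m by (metis image_eqI set_map)+
      then obtain a' b' where "a' \<in> set w" "b' \<in> set w" "g a = g a'" "g b = g b'" by auto
      moreover have "a' \<in> Vyz" "b' \<in> Vyz" using calculation w by (auto simp: Syz_def')
      ultimately show ?thesis using Ecorr uV a b w by (metis Syz_def' subsetD)
    qed
    then show "u \<in> Syz" using uV by (simp add: Syz_def')
  qed
  have self: "w \<in> yz_class y z w" for w by (auto simp: yz_class_def)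
  have cls_eq: "w \<in> Syz \<Longrightarrow> w' \<in> Syz \<Longrightarrow> map g w = map g w' \<longleftrightarrow> yz_class y z w = yz_class y z w'" for w w'
  proof
    assume w: "w \<in> Syz" and w': "w' \<in> Syz" and m: "map g w = map g w'"
    show "yz_class y z w = yz_class y z w'"
    proof (intro set_eqI iffI)
      fix u assume u: "u \<in> yz_class y z w"
      then have "u \<in> Syz" using cls_sub w by blast
      then show "u \<in> yz_class y z w'" using cls[OF Sx Sx[OF w]] cls[OF Sx Sx[OF w']] u m by metis
    next
      fix u assume u: "u \<in> yz_class y z w'"
      then have "u \<in> Syz" using cls_sub w' by blast
      then show "u \<in> yz_class y z w" using cls[OF Sx Sx[OF w]] cls[OF Sx Sx[OF w']] u m by metis
    qed
  next
    assume w: "w \<in> Syz" and w': "w' \<in> Syz" and "yz_class y z w = yz_class y z w'"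
    then have "w \<in> yz_class y z w'" using self by metis
    then show "map g w = map g w'" using cls[OF Sx[OF w] Sx[OF w']] by simp
  qed
  have step_S: "w \<in> Syz \<Longrightarrow> i \<in> Vyz \<Longrightarrow> fcfs_step Eyz i w \<in> Syz" for w i
  proof -
    assume w: "w \<in> Syz" and i: "i \<in> Vyz"
    show ?thesis
    proof (cases "dropWhile (\<lambda>j. \<not> Eyz i j) w = []")
      case True
      then have "\<forall>j\<in>set w. \<not> Eyz i j" by (simp add: dropWhile_eq_Nil_conv)
      moreover have "\<forall>j\<in>set w. \<not> Eyz j i"
        using calculation Ecorr i w Esym by (metis Syz_def' subsetD)
      moreover have "\<not> Eyz i i" using Ecorr[OF i i] Eirr by simp
      ultimately show ?thesis using True w i by (auto simp: fcfs_step_def Syz_def')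
    next
      case False
      have "set (takeWhile (\<lambda>j. \<not> Eyz i j) w @ tl (dropWhile (\<lambda>j. \<not> Eyz i j) w)) \<subseteq> set w"
      proof -
        have "set (takeWhile (\<lambda>j. \<not> Eyz i j) w) \<subseteq> set w" by (auto dest: set_takeWhileD)
        moreover have "set (tl (dropWhile (\<lambda>j. \<not> Eyz i j) w)) \<subseteq> set w"
          proof -
            have tl: "set (tl xs) \<subseteq> set xs" for xs :: "'v list" by (cases xs) auto
            show ?thesis using tl[of "dropWhile (\<lambda>j. \<not> Eyz i j) w"] by (auto dest: set_dropWhileD)
          qed
        ultimately show ?thesis by auto
      qed
      then have sub: "set (fcfs_step Eyz i w) \<subseteq> set w" unfolding fcfs_step_def Let_def if_not_P[OF False] .
      show ?thesis using w sub unfolding Syz_def' by blast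
    qed
  qed
  have comm: "w \<in> Syz \<Longrightarrow> i \<in> Vyz \<Longrightarrow> map g (fcfs_step Eyz i w) = fcfs_step E (g i) (map g w)" for w i
    by (rule step_map) (use Ecorr in \<open>auto simp: Syz_def'\<close>)
  have img: "map g ` Syz = fcfs_states V E"
  proof (intro set_eqI iffI)
    fix v assume "v \<in> map g ` Syz"
    then obtain w where w: "w \<in> Syz" "v = map g w" by auto
    have "set v \<subseteq> V" using w gVyz by (auto simp: Syz_def')
    moreover have "\<not> E a b" if "a \<in> set v" "b \<in> set v" for a b
      using that w Ecorr unfolding Syz_def' by (auto simp: subset_iff)
    ultimately show "v \<in> fcfs_states V E" by (simp add: fcfs_states_def)
  next
    fix v assume v: "v \<in> fcfs_states V E"
    define h where "h = (\<lambda>a. if a = x then y else a)"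
    have hV: "a \<in> V \<Longrightarrow> h a \<in> Vyz" for a by (auto simp: h_def Vyz_eq)
    have gh: "a \<in> V \<Longrightarrow> g (h a) = a" for a using y_new z_new by (auto simp: h_def g_def)
    have "map g (map h v) = v" using v gh by (auto simp: fcfs_states_def map_idI subset_iff)
    moreover have "map h v \<in> Syz"
    proof -
      have "set (map h v) \<subseteq> Vyz" using v hV by (auto simp: fcfs_states_def)
      moreover have "\<not> Eyz a b" if "a \<in> set (map h v)" "b \<in> set (map h v)" for a b
        using that v Ecorr hV gh by (auto simp: fcfs_states_def subset_iff)
      ultimately show ?thesis by (simp add: Syz_def')
    qed
    ultimately show "v \<in> map g ` Syz" by (metis image_eqI)
  qed
  have main: "w \<in> Syz \<Longrightarrow> w' \<in> Syz \<Longrightarrow>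
      infsum (Pyz w) (yz_class y z w') = fcfs_P V E \<alpha> (map g w) (map g w')" for w w'
  proof -
    assume w: "w \<in> Syz" and w': "w' \<in> Syz"
    have finVyz: "finite Vyz" using finV by (simp add: Vyz_eq)
    have "infsum (Pyz w) (yz_class y z w') =
        (\<Sum>i\<in>Vyz. if fcfs_step Eyz i w \<in> yz_class y z w' then \<beta> i else 0)"
      unfolding Pyz_def by (rule infsum_P[OF finVyz])
    also have "\<dots> = (\<Sum>i\<in>Vyz. if fcfs_step E (g i) (map g w) = map g w' then \<beta> i else 0)"
    proof (intro sum.cong refl)
      fix i assume i: "i \<in> Vyz"
      have "fcfs_step Eyz i w \<in> yz_class y z w' \<longleftrightarrow> map g (fcfs_step Eyz i w) = map g w'"
        using cls[OF Sx[OF step_S[OF w i]] Sx[OF w']] by simp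
      then show "(if fcfs_step Eyz i w \<in> yz_class y z w' then \<beta> i else 0) =
          (if fcfs_step E (g i) (map g w) = map g w' then \<beta> i else 0)"
        using comm[OF w i] by simp
    qed
    also have "\<dots> = (\<Sum>i\<in>V - {x}. if fcfs_step E i (map g w) = map g w' then \<alpha> i else 0)
        + (\<Sum>i\<in>{y,z}. if fcfs_step E x (map g w) = map g w' then \<beta> i else 0)"
    proof -
      have "(\<Sum>i\<in>Vyz. if fcfs_step E (g i) (map g w) = map g w' then \<beta> i else 0)
          = (\<Sum>i\<in>V - {x}. if fcfs_step E (g i) (map g w) = map g w' then \<beta> i else 0)
          + (\<Sum>i\<in>{y,z}. if fcfs_step E (g i) (map g w) = map g w' then \<beta> i else 0)"
        unfolding Vyz_eq using finV y_new z_new by (intro sum.union_disjoint) auto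
      moreover have "(\<Sum>i\<in>V - {x}. if fcfs_step E (g i) (map g w) = map g w' then \<beta> i else 0)
          = (\<Sum>i\<in>V - {x}. if fcfs_step E i (map g w) = map g w' then \<alpha> i else 0)"
        using beta_other y_new z_new by (intro sum.cong refl) (auto simp: g_def)
      moreover have "(\<Sum>i\<in>{y,z}. if fcfs_step E (g i) (map g w) = map g w' then \<beta> i else 0)
          = (\<Sum>i\<in>{y,z}. if fcfs_step E x (map g w) = map g w' then \<beta> i else 0)"
        by (intro sum.cong refl) (auto simp: g_def)
      ultimately show ?thesis by simp
    qed
    also have "\<dots> = (\<Sum>i\<in>V - {x}. if fcfs_step E i (map g w) = map g w' then \<alpha> i else 0)
        + (if fcfs_step E x (map g w) = map g w' then \<alpha> x else 0)"
      using yz beta_sum by simp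
    also have "\<dots> = fcfs_P V E \<alpha> (map g w) (map g w')"
      unfolding fcfs_P_def using finV x_in by (simp add: sum.remove add.commute)
    finally show ?thesis .
  qed
  have part: "partition_on Syz (yz_class y z ` Syz)"
    unfolding partition_on_def
  proof (intro conjI)
    show "\<Union> (yz_class y z ` Syz) = Syz" using cls_sub self by blast
    show "{} \<notin> yz_class y z ` Syz" using self by blast
    show "disjoint (yz_class y z ` Syz)"
    proof (rule disjointI)
      fix A B assume A: "A \<in> yz_class y z ` Syz" and B: "B \<in> yz_class y z ` Syz" and ne: "A \<noteq> B"
      obtain a b where a: "a \<in> Syz" "A = yz_class y z a" and b: "b \<in> Syz" "B = yz_class y z b"
        using A B by auto
      show "A \<inter> B = {}"
      proof (rule ccontr)
        assume "A \<inter> B \<noteq> {}"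
        then obtain u where u: "u \<in> A" "u \<in> B" by auto
        have uS: "u \<in> Syz" using u a cls_sub by blast
        have "map g u = map g a" "map g u = map g b"
          using u a b cls[OF Sx[OF uS] Sx] by auto
        then show False using cls_eq a b ne by metis
      qed
    qed
  qed
  have lump: "ordinarily_lumpable Pyz (yz_class y z ` Syz)"
    unfolding ordinarily_lumpable_def
  proof (intro ballI)
    fix A B w1 w2 assume A: "A \<in> yz_class y z ` Syz" and B: "B \<in> yz_class y z ` Syz"
      and w1: "w1 \<in> A" and w2: "w2 \<in> A"
    obtain a where a: "a \<in> Syz" "A = yz_class y z a" using A by auto
    obtain b where b: "b \<in> Syz" "B = yz_class y z b" using B by auto
    have s1: "w1 \<in> Syz" "w2 \<in> Syz" using w1 w2 a cls_sub by blast+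
    have "map g w1 = map g a" "map g w2 = map g a" using w1 w2 a cls[OF Sx Sx] s1 by auto
    then show "infsum (Pyz w1) B = infsum (Pyz w2) B" using main s1 b by metis
  qed
  show ?thesis
    unfolding Let_def Vyz_def[symmetric] Eyz_def[symmetric] Syz_def[symmetric] Pyz_def[symmetric] mg
    using part lump img cls_eq main by blast
qed

end
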